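(* Let $p$ be a prime and let $\pi,\rho,\tau\in\mathbb{L}_p[t]$ be monic polynomials of positive degree with $\pi=\rho\cdot\tau$. Then $\pi$ is expansive if and only if both $\rho$ and $\tau$ are expansive.
   Context: $\mathbb{L}_p=\mathbb{Z}/p\mathbb{Z}[X,X^{-1}]$ is the ring of Laurent polynomials over $\mathbb{Z}/p\mathbb{Z}$. For nonzero $\alpha\in\mathbb{L}_p$, $\deg^+(\alpha)$ (resp. $\deg^-(\alpha)$) is the largest (resp. smallest) exponent of a monomial with nonzero coefficient; $\deg^+(0)=-\infty$, $\deg^-(0)=+\infty$. A monic polynomial $\alpha_0+\alpha_1t+\dots+\alpha_{n-1}t^{n-1}+t^n\in\mathbb{L}_p[t]$ ($n\ge1$) is expansive if $\alpha_0\neq0$ and (i) $\deg^+(\alpha_0)>0$ and $\deg^+(\alpha_0)>\deg^+(\alpha_i)$ for all $i\in\{1,\dots,n-1\}$, and (ii) $\deg^-(\alpha_0)<0$ and $\deg^-(\alpha_0)<\deg^-(\alpha_i)$ for all $i\in\{1,\dots,n-1\}$. *)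

theory Defs
  imports "Berlekamp_Zassenhaus.Finite_Field"
    "HOL-Computational_Algebra.Formal_Laurent_Series"
    "HOL-Computational_Algebra.Polynomial"
    "HOL-Library.Extended_Real"
begin

text \<open>The ring L_p = Z/pZ[X,X^-1] of Laurent polynomials is represented as the
  subring of formal Laurent series over Z/pZ (type 'p mod_ring, p = CARD('p) prime)
  having only finitely many nonzero coefficients.  Elements of L_p[t] are
  polynomials with coefficients in this subring.\<close>

definition is_laurent_poly :: "'a::zero fls \<Rightarrow> bool" where
  "is_laurent_poly f \<longleftrightarrow> finite {n. fls_nth f n \<noteq> 0}"

definition in_Lp_poly :: "'a::zero fls poly \<Rightarrow> bool" where
  "in_Lp_poly P \<longleftrightarrow> (\<forall>i. is_laurent_poly (coeff P i))"

definition deg_plus :: "'a::zero fls \<Rightarrow> ereal" where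
  "deg_plus f = (if f = 0 then -\<infinity> else ereal (of_int (Max {n. fls_nth f n \<noteq> 0})))"

definition deg_minus :: "'a::zero fls \<Rightarrow> ereal" where
  "deg_minus f = (if f = 0 then \<infinity> else ereal (of_int (Min {n. fls_nth f n \<noteq> 0})))"

definition expansive :: "'a::comm_ring_1 fls poly \<Rightarrow> bool" where
  "expansive P \<longleftrightarrow>
     lead_coeff P = 1 \<and> degree P \<ge> 1 \<and> coeff P 0 \<noteq> 0 \<and>
     deg_plus (coeff P 0) > 0 \<and>
     (\<forall>i\<in>{1..<degree P}. deg_plus (coeff P 0) > deg_plus (coeff P i)) \<and>
     deg_minus (coeff P 0) < 0 \<and>
     (\<forall>i\<in>{1..<degree P}. deg_minus (coeff P 0) < deg_minus (coeff P i))"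

end

theory Submission
  imports Defs
begin

unbundle fps_syntax


lemma ereal_add_strict_fin:
  fixes a b x y :: ereal
  assumes "\<bar>a\<bar> \<noteq> \<infinity>" "\<bar>b\<bar> \<noteq> \<infinity>" "a < x" "b \<le> y"
  shows "a + b < x + y"
  using assms by (cases a; cases b; cases x; cases y) auto

locale valS =
  fixes S :: "'a::idom set" and v :: "'a \<Rightarrow> ereal"
  assumes S0: "0 \<in> S" and S1: "1 \<in> S"
    and Sadd: "x \<in> S \<Longrightarrow> y \<in> S \<Longrightarrow> x + y \<in> S"
    and Smult: "x \<in> S \<Longrightarrow> y \<in> S \<Longrightarrow> x * y \<in> S"
    and v_inf: "x \<in> S \<Longrightarrow> v x = \<infinity> \<longleftrightarrow> x = 0"
    and v_minf: "x \<in> S \<Longrightarrow> v x \<noteq> -\<infinity>"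
    and v_one: "v 1 = 0"
    and v_mult: "x \<in> S \<Longrightarrow> y \<in> S \<Longrightarrow> v (x * y) = v x + v y"
    and v_add: "x \<in> S \<Longrightarrow> y \<in> S \<Longrightarrow> min (v x) (v y) \<le> v (x + y)"
    and v_add_eq: "x \<in> S \<Longrightarrow> y \<in> S \<Longrightarrow> v x < v y \<Longrightarrow> v (x + y) = v x"
begin

definition SP :: "'a poly \<Rightarrow> bool" where "SP p \<longleftrightarrow> (\<forall>i. coeff p i \<in> S)"
definition E :: "'a poly \<Rightarrow> bool" where
  "E p \<longleftrightarrow> (\<forall>i\<in>{1..degree p}. v (coeff p 0) < v (coeff p i))"

lemma sum_S: "finite A \<Longrightarrow> (\<forall>i\<in>A. f i \<in> S) \<Longrightarrow> sum f A \<in> S"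
  by (induct A rule: finite_induct) (auto simp: S0 Sadd)

lemma sum_v: "finite A \<Longrightarrow> (\<forall>i\<in>A. f i \<in> S) \<Longrightarrow> (\<forall>i\<in>A. c < v (f i)) \<Longrightarrow> c < \<infinity>
   \<Longrightarrow> c < v (sum f A)"
proof (induct A rule: finite_induct)
  case empty then show ?case using v_inf[OF S0] by simp
next
  case (insert x F)
  have "c < min (v (f x)) (v (sum f F))" using insert by simp
  also have "\<dots> \<le> v (f x + sum f F)" using insert by (intro v_add sum_S) auto
  finally show ?case using insert by simp
qed

lemma SP_mult: "SP p \<Longrightarrow> SP q \<Longrightarrow> SP (p * q)"
  unfolding SP_def coeff_mult by (auto intro!: sum_S Smult)

lemma min_index:
  assumes "SP R" "lead_coeff R = 1"
  shows "\<exists>i0 m. i0 \<le> degree R \<and> v (coeff R i0) = m \<and> \<bar>m\<bar> \<noteq> \<infinity> \<and>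
     (\<forall>i. m \<le> v (coeff R i)) \<and> (\<forall>i>i0. m < v (coeff R i))"
proof -
  define m where "m = Min ((\<lambda>i. v (coeff R i)) ` {..degree R})"
  define I where "I = {i. i \<le> degree R \<and> v (coeff R i) = m}"
  define i0 where "i0 = Max I"
  have fin: "finite I" unfolding I_def by auto
  have "m \<in> (\<lambda>i. v (coeff R i)) ` {..degree R}" unfolding m_def by (intro Min_in) auto
  then have ne: "I \<noteq> {}" unfolding I_def by auto
  have i0I: "i0 \<in> I" unfolding i0_def using fin ne by simp
  have mle: "m \<le> v (coeff R i)" if "i \<le> degree R" for i
    unfolding m_def using that by (intro Min_le) auto
  have m0: "m \<le> 0" using mle[of "degree R"] assms v_one by simp
  have mle': "m \<le> v (coeff R i)" for i
  proof (cases "i \<le> degree R")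
    case False then have "coeff R i = 0" by (simp add: coeff_eq_0)
    then show ?thesis using v_inf[OF S0] by simp
  qed (rule mle)
  have gt: "m < v (coeff R i)" if "i > i0" for i
  proof (cases "i \<le> degree R")
    case True
    have "i \<notin> I" using that Max_ge[OF fin] i0_def by force
    then show ?thesis using True mle[OF True] unfolding I_def by auto
  next
    case False then have "coeff R i = 0" by (simp add: coeff_eq_0)
    then show ?thesis using v_inf[OF S0] m0 by (cases m) auto
  qed
  have "v (coeff R i0) = m" "i0 \<le> degree R" using i0I unfolding I_def by auto
  moreover have "m \<noteq> -\<infinity>" using calculation v_minf assms(1) unfolding SP_def by metis
  moreover have "m \<noteq> \<infinity>" using m0 by auto
  ultimately show ?thesis using mle' gt by (intro exI[of _ i0] exI[of _ m]) auto
qed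

lemma deg_mult:
  fixes R T :: "'a poly"
  assumes "lead_coeff R = 1" "lead_coeff T = 1"
  shows "degree (R * T) = degree R + degree T"
proof -
  have "R \<noteq> 0" "T \<noteq> 0" using assms by auto
  then show ?thesis by (rule degree_mult_eq)
qed

lemma E_mult:
  assumes "SP R" "SP T" "lead_coeff R = 1" "lead_coeff T = 1" "degree R > 0" "degree T > 0"
    "E R" "E T"
  shows "E (R * T)"
proof -
  have SR: "coeff R i \<in> S" "coeff T i \<in> S" for i using assms unfolding SP_def by auto
  define a where "a = v (coeff R 0)"
  define b where "b = v (coeff T 0)"
  have "v (coeff R 0) < v (coeff R (degree R))" using assms(7,5) unfolding E_def by auto
  then have a0: "a < 0" using assms(3) v_one unfolding a_def by simp
  have "v (coeff T 0) < v (coeff T (degree T))" using assms(8,6) unfolding E_def by auto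
  then have b0: "b < 0" using assms(4) v_one unfolding b_def by simp
  have afin: "\<bar>a\<bar> \<noteq> \<infinity>" using a0 v_minf[OF SR(1)] unfolding a_def by (cases "v (coeff R 0)") auto
  have bfin: "\<bar>b\<bar> \<noteq> \<infinity>" using b0 v_minf[OF SR(2)] unfolding b_def by (cases "v (coeff T 0)") auto
  have gtR: "a < v (coeff R i)" if "i \<ge> 1" for i
  proof (cases "i \<le> degree R")
    case True then show ?thesis using assms(7) that unfolding E_def a_def by auto
  next
    case False then have "coeff R i = 0" by (simp add: coeff_eq_0)
    then show ?thesis using v_inf[OF S0] a0 by (cases a) auto
  qed
  have gtT: "b < v (coeff T i)" if "i \<ge> 1" for i
  proof (cases "i \<le> degree T")
    case True then show ?thesis using assms(8) that unfolding E_def b_def by auto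
  next
    case False then have "coeff T i = 0" by (simp add: coeff_eq_0)
    then show ?thesis using v_inf[OF S0] b0 by (cases b) auto
  qed
  have geR: "a \<le> v (coeff R i)" for i using gtR[of i] a_def by (cases "i = 0") auto
  have geT: "b \<le> v (coeff T i)" for i using gtT[of i] b_def by (cases "i = 0") auto
  have "coeff (R * T) 0 = coeff R 0 * coeff T 0" by (simp add: coeff_mult)
  then have c0: "v (coeff (R * T) 0) = a + b" using v_mult[OF SR(1) SR(2)] a_def b_def by simp
  show ?thesis unfolding E_def
  proof
    fix k assume k: "k \<in> {1..degree (R * T)}"
    have "a + b < v (coeff (R * T) k)"
      unfolding coeff_mult
    proof (rule sum_v)
      show "\<forall>i\<in>{..k}. a + b < v (coeff R i * coeff T (k - i))"
      proof
        fix i assume i: "i \<in> {..k}"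
        show "a + b < v (coeff R i * coeff T (k - i))"
        proof (cases "i \<ge> 1")
          case True
          then show ?thesis unfolding v_mult[OF SR(1) SR(2)]
            by (intro ereal_add_strict_fin afin bfin gtR geT)
        next
          case False
          then have "k - i \<ge> 1" using k i by auto
          then show ?thesis unfolding v_mult[OF SR(1) SR(2)]
            using ereal_add_strict_fin[OF bfin afin gtT geR] by (simp add: add.commute)
        qed
      qed
    next
      show "\<forall>i\<in>{..k}. coeff R i * coeff T (k - i) \<in> S" using SR Smult by blast
    next
      show "a + b < \<infinity>" using afin bfin by (cases a; cases b) auto
    qed simp
    then show "v (coeff (R * T) 0) < v (coeff (R * T) k)" using c0 by simp
  qed
qed

lemma E_factor:
  assumes "SP R" "SP T" "lead_coeff R = 1" "lead_coeff T = 1" "degree R > 0" "degree T > 0"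
    "E (R * T)"
  shows "E R"
proof -
  have SR: "coeff R i \<in> S" "coeff T i \<in> S" for i using assms unfolding SP_def by auto
  obtain i0 m where i0all: "i0 \<le> degree R \<and> v (coeff R i0) = m \<and> \<bar>m\<bar> \<noteq> \<infinity> \<and>
     (\<forall>i. m \<le> v (coeff R i)) \<and> (\<forall>i>i0. m < v (coeff R i))"
    using min_index[OF assms(1,3)] by (elim exE) (erule that)
  have i0: "i0 \<le> degree R" "v (coeff R i0) = m" "\<bar>m\<bar> \<noteq> \<infinity>"
     "\<And>i. m \<le> v (coeff R i)" "\<And>i. i > i0 \<Longrightarrow> m < v (coeff R i)"
    using i0all by auto
  obtain j0 n where j0all: "j0 \<le> degree T \<and> v (coeff T j0) = n \<and> \<bar>n\<bar> \<noteq> \<infinity> \<and>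
     (\<forall>i. n \<le> v (coeff T i)) \<and> (\<forall>i>j0. n < v (coeff T i))"
    using min_index[OF assms(2,4)] by (elim exE) (erule that)
  have j0: "j0 \<le> degree T" "v (coeff T j0) = n" "\<bar>n\<bar> \<noteq> \<infinity>"
     "\<And>i. n \<le> v (coeff T i)" "\<And>i. i > j0 \<Longrightarrow> n < v (coeff T i)"
    using j0all by auto
  define k where "k = i0 + j0"
  have split: "coeff (R * T) k = coeff R i0 * coeff T j0 +
      (\<Sum>i\<in>{..k} - {i0}. coeff R i * coeff T (k - i))"
    unfolding coeff_mult by (subst sum.remove[of _ i0]) (auto simp: k_def)
  have rest: "m + n < v (\<Sum>i\<in>{..k} - {i0}. coeff R i * coeff T (k - i))"
  proof (rule sum_v)
    show "\<forall>i\<in>{..k} - {i0}. m + n < v (coeff R i * coeff T (k - i))"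
    proof
      fix i assume i: "i \<in> {..k} - {i0}"
      show "m + n < v (coeff R i * coeff T (k - i))"
      proof (cases "i > i0")
        case True
        then show ?thesis unfolding v_mult[OF SR(1) SR(2)]
          by (intro ereal_add_strict_fin i0 j0)
      next
        case False
        then have "k - i > j0" using i k_def by auto
        then show ?thesis unfolding v_mult[OF SR(1) SR(2)]
          using ereal_add_strict_fin[OF j0(3) i0(3) j0(5) i0(4)] by (simp add: add.commute)
      qed
    qed
  next
    show "\<forall>i\<in>{..k} - {i0}. coeff R i * coeff T (k - i) \<in> S" using SR Smult by blast
  next
    show "m + n < \<infinity>" using i0(3) j0(3) by (cases m; cases n) auto
  qed simp
  have AS: "coeff R i0 * coeff T j0 \<in> S" using SR Smult by blast
  have BS: "(\<Sum>i\<in>{..k} - {i0}. coeff R i * coeff T (k - i)) \<in> S"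
    by (rule sum_S) (use SR Smult in auto)
  have vA: "v (coeff R i0 * coeff T j0) = m + n" using v_mult[OF SR(1) SR(2)] i0(2) j0(2) by simp
  have vk: "v (coeff (R * T) k) = m + n"
    unfolding split using v_add_eq[OF AS BS] vA rest by simp
  have k0: "k = 0"
  proof (rule ccontr)
    assume "k \<noteq> 0"
    moreover have "k \<le> degree (R * T)" using deg_mult[OF assms(3,4)] i0 j0 k_def by simp
    ultimately have "v (coeff (R * T) 0) < v (coeff (R * T) k)" using assms(7) unfolding E_def by auto
    then have "v (coeff (R * T) 0) < m + n" using vk by simp
    moreover have "coeff (R * T) 0 = coeff R 0 * coeff T 0" by (simp add: coeff_mult)
    then have "m + n \<le> v (coeff (R * T) 0)"
      using v_mult[OF SR(1) SR(2)] add_mono[OF i0(4) j0(4)] by simp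
    ultimately show False by simp
  qed
  then have "i0 = 0" using k_def by simp
  then show ?thesis unfolding E_def using i0 by auto
qed

lemma E_mult_iff:
  assumes "SP R" "SP T" "lead_coeff R = 1" "lead_coeff T = 1" "degree R > 0" "degree T > 0"
  shows "E (R * T) \<longleftrightarrow> E R \<and> E T"
  using E_mult[OF assms] E_factor[OF assms] E_factor[OF assms(2,1,4,3,6,5)]
  by (auto simp: mult.commute)

end

subsection \<open>Concrete valuations on Laurent polynomials\<close>

definition LP :: "'a::idom fls set" where "LP = {f. is_laurent_poly f}"

definition dmax :: "'a::zero fls \<Rightarrow> int" where "dmax f = Max {n. f $$ n \<noteq> 0}"

lemma dmax_props:
  assumes "is_laurent_poly f" "f \<noteq> 0"
  shows "f $$ dmax f \<noteq> 0" "\<And>n. f $$ n \<noteq> 0 \<Longrightarrow> n \<le> dmax f"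
    "\<And>n. n > dmax f \<Longrightarrow> f $$ n = 0"
proof -
  have fin: "finite {n. f $$ n \<noteq> 0}" using assms unfolding is_laurent_poly_def by simp
  have ne: "{n. f $$ n \<noteq> 0} \<noteq> {}" using assms(2) nth_fls_subdegree_nonzero by blast
  show "f $$ dmax f \<noteq> 0" unfolding dmax_def using Max_in[OF fin ne] by simp
  show le: "\<And>n. f $$ n \<noteq> 0 \<Longrightarrow> n \<le> dmax f" unfolding dmax_def using Max_ge[OF fin] by simp
  show "\<And>n. n > dmax f \<Longrightarrow> f $$ n = 0" using le by force
qed

lemma dmax_eqI:
  assumes "is_laurent_poly f" "f $$ m \<noteq> 0" "\<And>n. n > m \<Longrightarrow> f $$ n = 0"
  shows "dmax f = m"
proof -
  have "f \<noteq> 0" using assms(2) by auto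
  then show ?thesis using dmax_props[OF assms(1)] assms(2,3) by (meson antisym not_le)
qed

lemma deg_plus_eq: "f \<noteq> 0 \<Longrightarrow> deg_plus f = ereal (of_int (dmax f))"
  unfolding deg_plus_def dmax_def by simp

lemma deg_minus_eq:
  assumes "is_laurent_poly f" "f \<noteq> 0"
  shows "deg_minus f = ereal (of_int (fls_subdegree f))"
proof -
  have fin: "finite {n. f $$ n \<noteq> 0}" using assms unfolding is_laurent_poly_def by simp
  have "Min {n. f $$ n \<noteq> 0} = fls_subdegree f"
    by (rule Min_eqI[OF fin]) (use assms fls_subdegree_leI in auto)
  then show ?thesis unfolding deg_minus_def using assms by simp
qed

lemma lp_times_nth:
  fixes f g :: "'a::idom fls"
  assumes "is_laurent_poly f" "is_laurent_poly g" "f \<noteq> 0" "g \<noteq> 0"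
  shows "\<And>n. n > dmax f + dmax g \<Longrightarrow> (f * g) $$ n = 0"
    "(f * g) $$ (dmax f + dmax g) = f $$ dmax f * g $$ dmax g"
proof -
  note F = dmax_props[OF assms(1,3)] and G = dmax_props[OF assms(2,4)]
  show "(f * g) $$ n = 0" if "n > dmax f + dmax g" for n
    unfolding fls_times_nth(2)
  proof (rule sum.neutral, rule ballI)
    fix i assume "i \<in> {fls_subdegree f..n - fls_subdegree g}"
    show "f $$ i * g $$ (n - i) = 0"
    proof (cases "i > dmax f")
      case True then show ?thesis using F(3) by simp
    next
      case False then have "n - i > dmax g" using that by simp
      then show ?thesis using G(3) by simp
    qed
  qed
  have sf: "fls_subdegree f \<le> dmax f" using F(1) fls_subdegree_leI by blast
  have sg: "fls_subdegree g \<le> dmax g" using G(1) fls_subdegree_leI by blast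
  show "(f * g) $$ (dmax f + dmax g) = f $$ dmax f * g $$ dmax g"
    unfolding fls_times_nth(2)
  proof (subst sum.remove[of _ "dmax f"])
    show "dmax f \<in> {fls_subdegree f..dmax f + dmax g - fls_subdegree g}" using sf sg by simp
    have "(\<Sum>i\<in>{fls_subdegree f..dmax f + dmax g - fls_subdegree g} - {dmax f}.
        f $$ i * g $$ (dmax f + dmax g - i)) = 0"
    proof (rule sum.neutral, rule ballI)
      fix i assume i: "i \<in> {fls_subdegree f..dmax f + dmax g - fls_subdegree g} - {dmax f}"
      show "f $$ i * g $$ (dmax f + dmax g - i) = 0"
      proof (cases "i > dmax f")
        case True then show ?thesis using F(3) by simp
      next
        case False then have "dmax f + dmax g - i > dmax g" using i by auto
        then show ?thesis using G(3) by simp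
      qed
    qed
    then show "f $$ dmax f * g $$ (dmax f + dmax g - dmax f) +
      (\<Sum>i\<in>{fls_subdegree f..dmax f + dmax g - fls_subdegree g} - {dmax f}.
        f $$ i * g $$ (dmax f + dmax g - i)) = f $$ dmax f * g $$ dmax g" by simp
  qed simp
qed

lemma lp_mult:
  fixes f g :: "'a::idom fls"
  assumes "is_laurent_poly f" "is_laurent_poly g"
  shows "is_laurent_poly (f * g)"
proof (cases "f = 0 \<or> g = 0")
  case True then show ?thesis using assms by auto
next
  case False
  have "{n. (f * g) $$ n \<noteq> 0} \<subseteq> {fls_subdegree f + fls_subdegree g .. dmax f + dmax g}"
    using lp_times_nth(1)[OF assms] False fls_times_nth_eq0 by (force simp: not_le)
  then show ?thesis unfolding is_laurent_poly_def by (rule finite_subset) simp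
qed

lemma lp_add:
  assumes "is_laurent_poly f" "is_laurent_poly g"
  shows "is_laurent_poly (f + g)"
proof -
  have "{n. (f + g) $$ n \<noteq> 0} \<subseteq> {n. f $$ n \<noteq> 0} \<union> {n. g $$ n \<noteq> 0}" by auto
  then show ?thesis using assms unfolding is_laurent_poly_def by (meson finite_Un finite_subset)
qed

lemma lp_0: "is_laurent_poly 0" unfolding is_laurent_poly_def by simp
lemma lp_1: "is_laurent_poly (1::'a::idom fls)"
proof -
  have "{n. (1::'a fls) $$ n \<noteq> 0} = {0}" by auto
  then show ?thesis unfolding is_laurent_poly_def by simp
qed

lemma dmax_mult:
  fixes f g :: "'a::idom fls"
  assumes "is_laurent_poly f" "is_laurent_poly g" "f \<noteq> 0" "g \<noteq> 0"
  shows "dmax (f * g) = dmax f + dmax g"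
  by (rule dmax_eqI[OF lp_mult[OF assms(1,2)]])
     (use lp_times_nth[OF assms] dmax_props(1)[OF assms(1,3)] dmax_props(1)[OF assms(2,4)] in auto)

lemma dmax_one: "dmax (1::'a::idom fls) = 0"
  by (rule dmax_eqI[OF lp_1]) auto

interpretation vm: valS "LP :: 'a::idom fls set" deg_minus
proof
  show "0 \<in> LP" "1 \<in> LP" unfolding LP_def using lp_0 lp_1 by auto
  fix x y :: "'a fls"
  show "x \<in> LP \<Longrightarrow> y \<in> LP \<Longrightarrow> x + y \<in> LP" "x \<in> LP \<Longrightarrow> y \<in> LP \<Longrightarrow> x * y \<in> LP"
    unfolding LP_def using lp_add lp_mult by auto
  show "x \<in> LP \<Longrightarrow> (deg_minus x = \<infinity>) = (x = 0)" unfolding deg_minus_def by simp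
  show "x \<in> LP \<Longrightarrow> deg_minus x \<noteq> - \<infinity>" unfolding deg_minus_def by simp
  show "deg_minus (1::'a fls) = 0" using deg_minus_eq[OF lp_1] by (simp add: zero_ereal_def)
  show "deg_minus (x * y) = deg_minus x + deg_minus y" if "x \<in> LP" "y \<in> LP"
  proof (cases "x = 0 \<or> y = 0")
    case True
    then show ?thesis by (auto simp: deg_minus_def)
  next
    case False
    then have "x * y \<noteq> 0" by simp
    then show ?thesis using False that lp_mult[of x y] unfolding LP_def
      by (simp add: deg_minus_eq)
  qed
  show "min (deg_minus x) (deg_minus y) \<le> deg_minus (x + y)" if "x \<in> LP" "y \<in> LP"
  proof (cases "x = 0 \<or> y = 0 \<or> x + y = 0")
    case True
    then show ?thesis by (auto simp: deg_minus_def)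
  next
    case False
    then have "min (fls_subdegree x) (fls_subdegree y) \<le> fls_subdegree (x + y)"
      using fls_plus_subdegree by blast
    then show ?thesis using False that lp_add[of x y] unfolding LP_def
      by (auto simp: deg_minus_eq min_def split: if_splits)
  qed
  show "deg_minus (x + y) = deg_minus x" if "x \<in> LP" "y \<in> LP" "deg_minus x < deg_minus y"
  proof -
    have x0: "x \<noteq> 0" using that(3) by (auto simp: deg_minus_def)
    show ?thesis
    proof (cases "y = 0")
      case True then show ?thesis by simp
    next
      case False
      then have lt: "fls_subdegree x < fls_subdegree y"
        using that x0 unfolding LP_def by (simp add: deg_minus_eq)
      then have e: "fls_subdegree (x + y) = fls_subdegree x" by (rule fls_subdegree_add_eq1[OF x0])
      have "(x + y) $$ fls_subdegree x \<noteq> 0" using lt x0 by simp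
      then have "x + y \<noteq> 0" by (rule fls_nonzeroI)
      then show ?thesis using e x0 that lp_add[of x y] unfolding LP_def by (simp add: deg_minus_eq)
    qed
  qed
qed

interpretation vp: valS "LP :: 'a::idom fls set" "\<lambda>f. - deg_plus f"
proof
  show "0 \<in> LP" "1 \<in> LP" unfolding LP_def using lp_0 lp_1 by auto
  fix x y :: "'a fls"
  show "x \<in> LP \<Longrightarrow> y \<in> LP \<Longrightarrow> x + y \<in> LP" "x \<in> LP \<Longrightarrow> y \<in> LP \<Longrightarrow> x * y \<in> LP"
    unfolding LP_def using lp_add lp_mult by auto
  show "x \<in> LP \<Longrightarrow> (- deg_plus x = \<infinity>) = (x = 0)" unfolding deg_plus_def by simp
  show "x \<in> LP \<Longrightarrow> - deg_plus x \<noteq> - \<infinity>" unfolding deg_plus_def by simp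
  show "- deg_plus (1::'a fls) = 0" using deg_plus_eq[of "1::'a fls"] dmax_one by simp
  show "- deg_plus (x * y) = - deg_plus x + - deg_plus y" if "x \<in> LP" "y \<in> LP"
  proof (cases "x = 0 \<or> y = 0")
    case True
    then show ?thesis by (auto simp: deg_plus_def)
  next
    case False
    then have "x * y \<noteq> 0" by simp
    then show ?thesis using False that unfolding LP_def
      by (simp add: deg_plus_eq dmax_mult)
  qed
  show "min (- deg_plus x) (- deg_plus y) \<le> - deg_plus (x + y)" if "x \<in> LP" "y \<in> LP"
  proof (cases "x + y = 0")
    case True then show ?thesis by (simp add: deg_plus_def)
  next
    case False
    have L: "is_laurent_poly x" "is_laurent_poly y" "is_laurent_poly (x + y)"
      using that lp_add unfolding LP_def by auto
    note S = dmax_props[OF L(3) False]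
    show ?thesis
    proof (cases "x $$ dmax (x + y) \<noteq> 0")
      case True
      then have "x \<noteq> 0" by auto
      then have "dmax (x + y) \<le> dmax x" using dmax_props(2)[OF L(1)] True by blast
      then have "- deg_plus x \<le> - deg_plus (x + y)"
        using deg_plus_eq[OF False] deg_plus_eq[OF \<open>x \<noteq> 0\<close>] by simp
      then show ?thesis by (simp add: min.coboundedI1)
    next
      case F: False
      then have T: "y $$ dmax (x + y) \<noteq> 0" using S(1) by auto
      then have "y \<noteq> 0" by auto
      then have "dmax (x + y) \<le> dmax y" using dmax_props(2)[OF L(2)] T by blast
      then have "- deg_plus y \<le> - deg_plus (x + y)"
        using deg_plus_eq[OF False] deg_plus_eq[OF \<open>y \<noteq> 0\<close>] by simp
      then show ?thesis by (simp add: min.coboundedI2)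
    qed
  qed
  show "- deg_plus (x + y) = - deg_plus x" if "x \<in> LP" "y \<in> LP" "- deg_plus x < - deg_plus y"
  proof -
    have L: "is_laurent_poly x" "is_laurent_poly y"
      using that unfolding LP_def by auto
    have x0: "x \<noteq> 0" using that(3) by (auto simp: deg_plus_def)
    show ?thesis
    proof (cases "y = 0")
      case True then show ?thesis by simp
    next
      case y0: False
      have lt: "dmax y < dmax x" using that(3) deg_plus_eq[OF x0] deg_plus_eq[OF y0] by simp
      note X = dmax_props[OF L(1) x0] and Y = dmax_props[OF L(2) y0]
      have "dmax (x + y) = dmax x"
        by (rule dmax_eqI[OF lp_add[OF L]]) (use X Y lt in auto)
      moreover have "x + y \<noteq> 0" using X(1) Y(3)[OF lt] by (metis add.right_neutral fls_plus_nth fls_zero_nth)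
      ultimately show ?thesis using deg_plus_eq[OF x0] deg_plus_eq[of "x + y"] by simp
    qed
  qed
qed

lemma expansive_iff:
  fixes P :: "'a::idom fls poly"
  assumes "lead_coeff P = 1" "degree P > 0"
  shows "expansive P \<longleftrightarrow> vm.E P \<and> vp.E P"
proof -
  have I: "{1..degree P} = insert (degree P) {1..<degree P}" using assms(2) by auto
  have d1: "deg_plus (1::'a fls) = 0" using deg_plus_eq[of "1::'a fls"] dmax_one by simp
  have m1: "deg_minus (1::'a fls) = 0" using deg_minus_eq[OF lp_1] by (simp add: zero_ereal_def)
  have z: "deg_minus (0::'a fls) = \<infinity>" by (simp add: deg_minus_def)
  have vmE: "vm.E P \<longleftrightarrow> deg_minus (coeff P 0) < 0 \<and>
     (\<forall>i\<in>{1..<degree P}. deg_minus (coeff P 0) < deg_minus (coeff P i))"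
    unfolding vm.E_def I using assms m1 by simp
  have vpE: "vp.E P \<longleftrightarrow> deg_plus (coeff P 0) > 0 \<and>
     (\<forall>i\<in>{1..<degree P}. deg_plus (coeff P 0) > deg_plus (coeff P i))"
    unfolding vp.E_def I using assms d1 by (simp add: ereal_minus_less_minus ereal_uminus_less_reorder)
  have "deg_minus (coeff P 0) < 0 \<Longrightarrow> coeff P 0 \<noteq> 0" using z by auto
  then show ?thesis unfolding expansive_def vmE vpE using assms by auto
qed

theorem lemma1:
  fixes \<pi> \<rho> \<tau> :: "'p::prime_card mod_ring fls poly"
  assumes "in_Lp_poly \<pi>" and "in_Lp_poly \<rho>" and "in_Lp_poly \<tau>"
    and "lead_coeff \<pi> = 1" and "lead_coeff \<rho> = 1" and "lead_coeff \<tau> = 1"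
    and "degree \<pi> > 0" and "degree \<rho> > 0" and "degree \<tau> > 0"
    and "\<pi> = \<rho> * \<tau>"
  shows "expansive \<pi> \<longleftrightarrow> expansive \<rho> \<and> expansive \<tau>"
proof -
  have S: "vm.SP \<rho>" "vm.SP \<tau>" "vp.SP \<rho>" "vp.SP \<tau>"
    unfolding vm.SP_def using assms(2,3) unfolding in_Lp_poly_def LP_def by auto
  show ?thesis
    unfolding assms(10)
    using expansive_iff[of "\<rho> * \<tau>"] expansive_iff[of \<rho>] expansive_iff[of \<tau>] assms
      vm.E_mult_iff[OF S(1,2) assms(5,6,8,9)] vp.E_mult_iff[OF S(3,4) assms(5,6,8,9)]
    by auto
qed

end
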